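(* Let $n>m\ge 1$. In the checker game on $n+m+1$ positions, each of the configurations $b^{n-m}O(wb)^m$ and $b^{n-m}(wb)^mO$ can be transformed, by a sequence of exactly $(n-m)(m+1)$ legal moves, into one of the configurations $(wb)^mOb^{n-m}$ or $O(wb)^mb^{n-m}$.
   Context: Positions $1,\dots,n+m+1$ in a row; a configuration is a word over $\{b,w,O\}$ with exactly one $O$, where $b$ denotes a black checker, $w$ a white checker and $O$ the vacancy; exponents denote repetition (e.g. $(wb)^m$ is $wb$ repeated $m$ times). A legal move is either a slide (a checker adjacent to the vacancy moves into it) or a jump (a checker at distance two from the vacancy jumps over the checker between them into the vacancy). *)

theory Defs
  imports Main
begin

datatype cell = Black | White | Vac  (* b, w, O *)

type_synonym config = "cell list"

definition legal_move :: "config \<Rightarrow> config \<Rightarrow> bool" where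
  "legal_move c c' \<longleftrightarrow>
     (\<exists>i j. i < length c \<and> j < length c \<and> c ! i = Vac \<and> c ! j \<noteq> Vac \<and>
        (j = i + 1 \<or> i = j + 1 \<or> j = i + 2 \<or> i = j + 2) \<and>
        c' = c[i := c ! j, j := Vac])"

definition wb_pow :: "nat \<Rightarrow> config" where
  "wb_pow m = concat (replicate m [White, Black])"

end

theory Submission
  imports Defs
begin

definition bw_pow :: "nat \<Rightarrow> config" where
  "bw_pow m = concat (replicate m [Black, White])"

lemma wb_Suc: "wb_pow (Suc m) = wb_pow m @ [White, Black]"
  unfolding wb_pow_def by (simp add: replicate_append_same[symmetric])
lemma bw_Suc: "bw_pow (Suc m) = bw_pow m @ [Black, White]"
  unfolding bw_pow_def by (simp add: replicate_append_same[symmetric])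
lemma wb_Suc2: "wb_pow (Suc m) = White # Black # wb_pow m"
  unfolding wb_pow_def by simp
lemma bw_Suc2: "bw_pow (Suc m) = Black # White # bw_pow m"
  unfolding bw_pow_def by simp
lemma bw_wb: "Black # wb_pow m = bw_pow m @ [Black]"
  by (induction m) (simp_all add: wb_pow_def bw_pow_def)

lemma bw_wb': "Black # wb_pow m @ xs = bw_pow m @ Black # xs"
  using bw_wb[of m] by (metis append_Cons append_assoc append_Cons append_Nil)

lemma rep_swap: "x # replicate j x @ xs = replicate j x @ x # xs"
  by (simp add: replicate_app_Cons_same)

lemma slide_right: "x \<noteq> Vac \<Longrightarrow> legal_move (u @ x # Vac # v) (u @ Vac # x # v)"
  unfolding legal_move_def
  apply (rule exI[of _ "Suc (length u)"], rule exI[of _ "length u"])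
  by (simp add: nth_append list_update_append)

lemma jump_right: "x \<noteq> Vac \<Longrightarrow> legal_move (u @ x # y # Vac # v) (u @ Vac # y # x # v)"
  unfolding legal_move_def
  apply (rule exI[of _ "Suc (Suc (length u))"], rule exI[of _ "length u"])
  by (simp add: nth_append list_update_append)

lemma jump_left: "x \<noteq> Vac \<Longrightarrow> legal_move (u @ Vac # y # x # v) (u @ x # y # Vac # v)"
  unfolding legal_move_def
  apply (rule exI[of _ "length u"], rule exI[of _ "Suc (Suc (length u))"])
  by (simp add: nth_append list_update_append)

lemma whites_left: "(legal_move ^^ m) (u @ Vac # bw_pow m @ v) (u @ wb_pow m @ Vac # v)"
proof (induction m arbitrary: u)
  case 0 then show ?case by (simp add: wb_pow_def bw_pow_def)
next
  case (Suc m)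
  have s: "legal_move (u @ Vac # bw_pow (Suc m) @ v) ((u @ [White, Black]) @ Vac # bw_pow m @ v)"
    using jump_left[of White u Black "bw_pow m @ v"] by (simp add: bw_Suc2)
  show ?case using relpowp_Suc_I2[of legal_move, OF s Suc.IH[of "u @ [White, Black]"]] by (simp add: wb_Suc2)
qed

lemma blacks_right: "(legal_move ^^ m) (u @ bw_pow m @ Vac # v) (u @ Vac # wb_pow m @ v)"
proof (induction m arbitrary: v)
  case 0 then show ?case by (simp add: wb_pow_def bw_pow_def)
next
  case (Suc m)
  have s: "legal_move (u @ bw_pow (Suc m) @ Vac # v) ((u @ bw_pow m) @ Vac # White # Black # v)"
    using jump_right[of Black "u @ bw_pow m" White v] by (simp add: bw_Suc)
  have "(legal_move ^^ Suc m) (u @ bw_pow (Suc m) @ Vac # v) (u @ Vac # wb_pow m @ White # Black # v)"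
  proof (rule relpowp_Suc_I2[of legal_move, OF s])
    show "(legal_move ^^ m) ((u @ bw_pow m) @ Vac # White # Black # v) (u @ Vac # wb_pow m @ White # Black # v)"
      using Suc.IH[of "White # Black # v"] by simp
  qed
  then show ?case by (simp add: wb_Suc)
qed

lemma roundA: "(legal_move ^^ Suc m) (replicate (Suc j) Black @ Vac # wb_pow m @ replicate r Black)
   (replicate j Black @ wb_pow m @ Vac # replicate (Suc r) Black)"
proof -
  have s: "legal_move (replicate (Suc j) Black @ Vac # wb_pow m @ replicate r Black)
     (replicate j Black @ Vac # bw_pow m @ Black # replicate r Black)"
    using slide_right[of Black "replicate j Black" "wb_pow m @ replicate r Black"]
    by (simp add: replicate_app_Cons_same bw_wb')
  show ?thesis using relpowp_Suc_I2[of legal_move, OF s whites_left] by simp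
qed

lemma roundC: "(legal_move ^^ Suc m) (replicate (Suc j) Black @ wb_pow m @ Vac # replicate r Black)
   (replicate j Black @ Vac # wb_pow m @ replicate (Suc r) Black)"
proof -
  have s: "legal_move (replicate (Suc j) Black @ wb_pow m @ Vac # replicate r Black)
     ((replicate j Black @ bw_pow m) @ Vac # Black # replicate r Black)"
    using slide_right[of Black "replicate j Black @ bw_pow m" "replicate r Black"]
    by (simp add: rep_swap bw_wb' del: replicate_app_Cons_same)
  have "(legal_move ^^ m) ((replicate j Black @ bw_pow m) @ Vac # Black # replicate r Black)
     (replicate j Black @ Vac # wb_pow m @ replicate (Suc r) Black)"
    using blacks_right[of m "replicate j Black" "Black # replicate r Black"] by simp
  then show ?thesis using relpowp_Suc_I2[of legal_move, OF s] by simp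
qed

lemma main: "(\<forall>r. \<exists>c' \<in> {wb_pow m @ [Vac] @ replicate (j + r) Black, [Vac] @ wb_pow m @ replicate (j + r) Black}.
      (legal_move ^^ (j * Suc m)) (replicate j Black @ Vac # wb_pow m @ replicate r Black) c') \<and>
   (\<forall>r. \<exists>c' \<in> {wb_pow m @ [Vac] @ replicate (j + r) Black, [Vac] @ wb_pow m @ replicate (j + r) Black}.
      (legal_move ^^ (j * Suc m)) (replicate j Black @ wb_pow m @ Vac # replicate r Black) c')"
proof (induction j)
  case 0 then show ?case by auto
next
  case (Suc j)
  have e: "Suc j * Suc m = Suc m + j * Suc m" by simp
  show ?case
  proof (intro conjI allI)
    fix r
    obtain c' where c': "c' \<in> {wb_pow m @ [Vac] @ replicate (j + Suc r) Black, [Vac] @ wb_pow m @ replicate (j + Suc r) Black}"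
      "(legal_move ^^ (j * Suc m)) (replicate j Black @ wb_pow m @ Vac # replicate (Suc r) Black) c'"
      using Suc.IH by blast
    have "(legal_move ^^ (Suc j * Suc m)) (replicate (Suc j) Black @ Vac # wb_pow m @ replicate r Black) c'"
      unfolding e relpowp_add using roundA c'(2) by blast
    then show "\<exists>c' \<in> {wb_pow m @ [Vac] @ replicate (Suc j + r) Black, [Vac] @ wb_pow m @ replicate (Suc j + r) Black}.
      (legal_move ^^ (Suc j * Suc m)) (replicate (Suc j) Black @ Vac # wb_pow m @ replicate r Black) c'"
      using c'(1) by auto
  next
    fix r
    obtain c' where c': "c' \<in> {wb_pow m @ [Vac] @ replicate (j + Suc r) Black, [Vac] @ wb_pow m @ replicate (j + Suc r) Black}"
      "(legal_move ^^ (j * Suc m)) (replicate j Black @ Vac # wb_pow m @ replicate (Suc r) Black) c'"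
      using Suc.IH by blast
    have "(legal_move ^^ (Suc j * Suc m)) (replicate (Suc j) Black @ wb_pow m @ Vac # replicate r Black) c'"
      unfolding e relpowp_add using roundC c'(2) by blast
    then show "\<exists>c' \<in> {wb_pow m @ [Vac] @ replicate (Suc j + r) Black, [Vac] @ wb_pow m @ replicate (Suc j + r) Black}.
      (legal_move ^^ (Suc j * Suc m)) (replicate (Suc j) Black @ wb_pow m @ Vac # replicate r Black) c'"
      using c'(1) by auto
  qed
qed

theorem lemma4:
  fixes n m :: nat
  assumes "n > m" and "m \<ge> 1"
  shows "\<forall>c \<in> {replicate (n - m) Black @ [Vac] @ wb_pow m, replicate (n - m) Black @ wb_pow m @ [Vac]}.
           \<exists>c' \<in> {wb_pow m @ [Vac] @ replicate (n - m) Black, [Vac] @ wb_pow m @ replicate (n - m) Black}.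
             (legal_move ^^ ((n - m) * (m + 1))) c c'"
proof -
  have "(\<forall>r. \<exists>c' \<in> {wb_pow m @ [Vac] @ replicate (n - m + r) Black, [Vac] @ wb_pow m @ replicate (n - m + r) Black}.
      (legal_move ^^ ((n - m) * Suc m)) (replicate (n - m) Black @ Vac # wb_pow m @ replicate r Black) c') \<and>
   (\<forall>r. \<exists>c' \<in> {wb_pow m @ [Vac] @ replicate (n - m + r) Black, [Vac] @ wb_pow m @ replicate (n - m + r) Black}.
      (legal_move ^^ ((n - m) * Suc m)) (replicate (n - m) Black @ wb_pow m @ Vac # replicate r Black) c')"
    by (rule main)
  then have a: "\<exists>c' \<in> {wb_pow m @ [Vac] @ replicate (n - m) Black, [Vac] @ wb_pow m @ replicate (n - m) Black}.
      (legal_move ^^ ((n - m) * (m + 1))) (replicate (n - m) Black @ [Vac] @ wb_pow m) c'"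
    and b: "\<exists>c' \<in> {wb_pow m @ [Vac] @ replicate (n - m) Black, [Vac] @ wb_pow m @ replicate (n - m) Black}.
      (legal_move ^^ ((n - m) * (m + 1))) (replicate (n - m) Black @ wb_pow m @ [Vac]) c'"
    by (metis Suc_eq_plus1 add_0_right append_Cons append_Nil append_Nil2 replicate_0)+
  show ?thesis using a b by blast
qed

end
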